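(* Let $H:\mathbb R\times\mathbb R\times\Omega\to\mathbb R$ satisfy (H1)–(H6) described in the context, fix $x\in\mathbb R$, $\omega\in\Omega$, $\mu>\tilde A(\omega)$, and let $l_\mu=(\mu-\tilde A(\omega))/c$ where $c$ is the Lipschitz constant of $H$ in $p$. Then for all $0\le t\le s$, $$\mathrm{dist}_{\mathcal H}\big(\mathcal R^\omega_{\mu,t},\mathcal R^\omega_{\mu,s}\big)\le\frac{s-t}{l_\mu}.$$
   Context: $H:\mathbb R\times\mathbb R\times\Omega\to\mathbb R$, $(p,y,\omega)\mapsto H(p,y,\omega)$. (H1) $H$ is Lipschitz in $p$ uniformly in $(y,\omega)$, with constant $c$. (H2) There are $c_0,C_0,\gamma>0$ with $-c_0|p+\gamma|\le H(p,y,\omega)\le C_0|p+\gamma|$. (H3) $\lim_{|p|\to\infty}\inf_{(y,\omega)}H(p,y,\omega)=+\infty$. (H4) There is a modulus $w$ with $|H(p,y,\omega)-H(p,x,\omega)|\le w(|x-y|(1+|p|))$. (H5) $p\mapsto H(p,y,\omega)$ is convex. (H6) $H(p,y,\omega)\ge H(0,y,\omega)$. $\tilde A(\omega)=\inf\{\mu:\ \exists v$ globally Lipschitz with $H(Dv,y,\omega)\le\mu$ in $\mathbb R$ (viscosity sense)$\}$. For $x,y\in\mathbb R$: $m_\mu(y,x,\omega)=\sup\{v(y)-v(x):\ v$ globally Lipschitz, $H(Dv,z,\omega)\le\mu$ in $\mathbb R$ in the viscosity sense$\}$. The reachable set is $\mathcal R^\omega_{\mu,t}=\{y\in\mathbb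 R:\ m_\mu(y,x,\omega)\le t\}$, and $\mathrm{dist}_{\mathcal H}(E,F)=\max\{\sup_{y\in F}\inf_{x\in E}|y-x|,\ \sup_{y\in E}\inf_{x\in F}|y-x|\}$ is the Hausdorff distance. *)

theory Defs
  imports "HOL-Analysis.Analysis"
begin

definition visc_sub ::
  "(real \<Rightarrow> real \<Rightarrow> 'w \<Rightarrow> real) \<Rightarrow> 'w \<Rightarrow> real \<Rightarrow> (real \<Rightarrow> real) \<Rightarrow> bool" where
  "visc_sub H \<omega> \<mu> v \<longleftrightarrow>
     (\<forall>y \<phi> \<phi>'. (\<forall>z. (\<phi> has_real_derivative \<phi>' z) (at z)) \<and> continuous_on UNIV \<phi>' \<and>
        (\<exists>e>0. \<forall>z. \<bar>z - y\<bar> < e \<longrightarrow> v z - \<phi> z \<le> v y - \<phi> y)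
        \<longrightarrow> H (\<phi>' y) y \<omega> \<le> \<mu>)"

definition glob_lipschitz :: "(real \<Rightarrow> real) \<Rightarrow> bool" where
  "glob_lipschitz v \<longleftrightarrow> (\<exists>L. L-lipschitz_on UNIV v)"

definition A_tilde :: "(real \<Rightarrow> real \<Rightarrow> 'w \<Rightarrow> real) \<Rightarrow> 'w \<Rightarrow> real" where
  "A_tilde H \<omega> = Inf {\<mu>. \<exists>v. glob_lipschitz v \<and> visc_sub H \<omega> \<mu> v}"

definition m_mu :: "(real \<Rightarrow> real \<Rightarrow> 'w \<Rightarrow> real) \<Rightarrow> real \<Rightarrow> real \<Rightarrow> real \<Rightarrow> 'w \<Rightarrow> real" where
  "m_mu H \<mu> y x \<omega> = Sup {v y - v x | v. glob_lipschitz v \<and> visc_sub H \<omega> \<mu> v}"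

definition reachable ::
  "(real \<Rightarrow> real \<Rightarrow> 'w \<Rightarrow> real) \<Rightarrow> real \<Rightarrow> real \<Rightarrow> real \<Rightarrow> 'w \<Rightarrow> real set" where
  "reachable H \<mu> t x \<omega> = {y. m_mu H \<mu> y x \<omega> \<le> t}"

definition hausdorff_dist :: "real set \<Rightarrow> real set \<Rightarrow> real" where
  "hausdorff_dist E F = max (SUP y\<in>F. INF x\<in>E. \<bar>y - x\<bar>) (SUP y\<in>E. INF x\<in>F. \<bar>y - x\<bar>)"

end

theory Submission
  imports Defs
begin

lemma local_max_deriv:
  fixes f g :: "real \<Rightarrow> real"
  assumes "(f has_real_derivative a) (at u)" "(g has_real_derivative b) (at u)"
    "e > 0" "\<And>r. \<bar>r - u\<bar> < e \<Longrightarrow> f r - g r \<le> f u - g u"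
  shows "a = b"
proof -
  have "((\<lambda>r. f r - g r) has_real_derivative a - b) (at u)"
    using assms by (intro derivative_intros)
  from DERIV_local_max[OF this assms(3)] have "a - b = 0"
    using assms(4) by (simp add: abs_minus_commute)
  thus ?thesis by simp
qed

lemma visc_subD:
  assumes "visc_sub H \<omega> \<mu> v" "\<And>z. (\<phi> has_real_derivative \<phi>' z) (at z)"
    "continuous_on UNIV \<phi>'" "e > 0" "\<And>z. \<bar>z - y\<bar> < e \<Longrightarrow> v z - \<phi> z \<le> v y - \<phi> y"
  shows "H (\<phi>' y) y \<omega> \<le> \<mu>"
  using assms unfolding visc_sub_def by blast

lemma visc_sub_mono:
  "visc_sub H \<omega> \<mu>1 v \<Longrightarrow> \<mu>1 \<le> \<mu>2 \<Longrightarrow> visc_sub H \<omega> \<mu>2 v"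
  unfolding visc_sub_def by (meson order_trans)

lemma max_visc:
  assumes vs: "visc_sub H \<omega> \<mu> v"
   and hyp: "\<And>u. v u < h u \<Longrightarrow> \<exists>e>0. \<exists>q. H q u \<omega> \<le> \<mu> \<and> (\<forall>r. \<bar>r-u\<bar> < e \<longrightarrow> h r = h u + q*(r-u))"
  shows "visc_sub H \<omega> \<mu> (\<lambda>r. max (v r) (h r))"
  unfolding visc_sub_def
proof (intro allI impI)
  fix y \<phi> \<phi>'
  assume A: "(\<forall>z. (\<phi> has_real_derivative \<phi>' z) (at z)) \<and> continuous_on UNIV \<phi>' \<and>
        (\<exists>e>0. \<forall>z. \<bar>z - y\<bar> < e \<longrightarrow> max (v z) (h z) - \<phi> z \<le> max (v y) (h y) - \<phi> y)"
  then obtain e where e: "e > 0" "\<And>z. \<bar>z - y\<bar> < e \<Longrightarrow> max (v z) (h z) - \<phi> z \<le> max (v y) (h y) - \<phi> y"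
    by blast
  show "H (\<phi>' y) y \<omega> \<le> \<mu>"
  proof (cases "h y \<le> v y")
    case True
    have "\<forall>z. \<bar>z - y\<bar> < e \<longrightarrow> v z - \<phi> z \<le> v y - \<phi> y"
      using e True by (smt (verit))
    with A e(1) vs show ?thesis unfolding visc_sub_def by blast
  next
    case False
    then obtain e2 q where q: "e2 > 0" "H q y \<omega> \<le> \<mu>" "\<And>r. \<bar>r-y\<bar> < e2 \<Longrightarrow> h r = h y + q*(r-y)"
      using hyp[of y] by auto
    have le: "(h y + q*(r-y)) - \<phi> r \<le> (h y + q*(y-y)) - \<phi> y" if "\<bar>r - y\<bar> < min e e2" for r
    proof -
      have r1: "\<bar>r - y\<bar> < e" "\<bar>r - y\<bar> < e2" using that by auto
      have "h r - \<phi> r \<le> max (v r) (h r) - \<phi> r" by simp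
      also have "\<dots> \<le> max (v y) (h y) - \<phi> y" using e(2)[OF r1(1)] .
      also have "\<dots> = h y - \<phi> y" using False by simp
      finally show ?thesis using q(3)[OF r1(2)] by simp
    qed
    have d1: "((\<lambda>r. h y + q*(r-y)) has_real_derivative q) (at y)"
      by (auto intro!: derivative_eq_intros)
    have "q = \<phi>' y"
      using local_max_deriv[OF d1, of \<phi> "\<phi>' y" "min e e2"] le A e(1) q(1) by auto
    with q(2) show ?thesis by simp
  qed
qed

lemma H0_le:
  fixes H :: "real \<Rightarrow> real \<Rightarrow> 'w \<Rightarrow> real"
  assumes H6: "\<And>p y. H p y \<omega> \<ge> H 0 y \<omega>"
   and wm: "mono w" and wt: "(w \<longlongrightarrow> 0) (at_right 0)"
   and H4: "\<And>p x y. \<bar>H p y \<omega> - H p x \<omega>\<bar> \<le> w (\<bar>x - y\<bar> * (1 + \<bar>p\<bar>))"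
   and vs: "visc_sub H \<omega> \<mu>1 v" and lip: "L-lipschitz_on UNIV v"
  shows "H 0 u \<omega> \<le> \<mu>1"
proof (rule ccontr)
  assume nt: "\<not> H 0 u \<omega> \<le> \<mu>1"
  define \<epsilon> where "\<epsilon> = H 0 u \<omega> - \<mu>1"
  have "\<epsilon> > 0" using nt unfolding \<epsilon>_def by simp
  have "\<forall>\<^sub>F r in at_right 0. w r < \<epsilon>" using order_tendstoD(2)[OF wt \<open>\<epsilon>>0\<close>] .
  then obtain b where b: "b > 0" "\<And>r. 0 < r \<Longrightarrow> r < b \<Longrightarrow> w r < \<epsilon>"
    by (auto simp: eventually_at_right_field)
  define \<rho> where "\<rho> = b/2"
  have \<rho>: "\<rho> > 0" "w \<rho> < \<epsilon>" using b unfolding \<rho>_def by auto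
  have L0: "L \<ge> 0" using lip by (rule lipschitz_on_nonneg)
  have vL: "\<bar>v a - v c\<bar> \<le> L * \<bar>a - c\<bar>" for a c
    using lip unfolding lipschitz_on_def dist_real_def by auto
  define K where "K = (L+1)/\<rho>"
  have K: "K > 0" "K * \<rho> = L + 1" using \<rho> L0 unfolding K_def by auto
  define G where "G r = v r - K*(r-u)^2" for r
  have contv: "continuous_on UNIV v" using lip by (rule lipschitz_on_continuous_on)
  have cont: "continuous_on (cball u \<rho>) G"
    unfolding G_def by (intro continuous_intros continuous_on_subset[OF contv]) auto
  obtain r0 where r0: "r0 \<in> cball u \<rho>" "\<And>r. r \<in> cball u \<rho> \<Longrightarrow> G r \<le> G r0"
    using continuous_attains_sup[OF compact_cball _ cont] \<rho> by fastforce
  have glob: "G r \<le> G r0" for r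
  proof (cases "r \<in> cball u \<rho>")
    case True then show ?thesis using r0 by auto
  next
    case False
    then have d: "\<bar>r - u\<bar> > \<rho>" by (auto simp: dist_real_def)
    have "K * \<bar>r - u\<bar> > L"
      using mult_strict_left_mono[OF d K(1)] K(2) by simp
    then have "K * \<bar>r - u\<bar> * \<bar>r - u\<bar> > L * \<bar>r - u\<bar>"
      using d \<rho> by (intro mult_strict_right_mono) auto
    then have "K*(r-u)^2 > L * \<bar>r - u\<bar>"
      by (simp add: power2_eq_square abs_mult_self_eq mult.assoc)
    then have "G r < v u" unfolding G_def using vL[of r u] by linarith
    also have "v u = G u" unfolding G_def by simp
    also have "\<dots> \<le> G r0" using r0(2)[of u] \<rho> by simp
    finally show ?thesis by simp
  qed
  have der: "((\<lambda>r. K*(r-u)^2) has_real_derivative (2*K*(z-u))) (at z)" for z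
    by (auto intro!: derivative_eq_intros)
  have cd: "continuous_on UNIV (\<lambda>z. 2*K*(z-u))" by (intro continuous_intros)
  have loc: "v z - K*(z-u)^2 \<le> v r0 - K*(r0-u)^2" for z
    using glob unfolding G_def by auto
  have "H ((\<lambda>z. 2*K*(z-u)) r0) r0 \<omega> \<le> \<mu>1"
    by (rule visc_subD[OF vs der cd zero_less_one loc])
  then have h0: "H 0 r0 \<omega> \<le> \<mu>1" using H6[of r0 "2*K*(r0-u)"] by linarith
  have "H 0 u \<omega> \<le> H 0 r0 \<omega> + w (\<bar>u - r0\<bar>)"
    using H4[of 0 r0 u] by simp
  also have "w \<bar>u - r0\<bar> \<le> w \<rho>"
    using r0(1) wm by (auto simp: dist_real_def mono_def)
  finally show False using h0 \<rho> unfolding \<epsilon>_def by linarith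
qed

lemma lip_up:
  fixes H :: "real \<Rightarrow> real \<Rightarrow> 'w \<Rightarrow> real"
  assumes Rb: "\<And>p y. \<bar>p\<bar> \<ge> R \<Longrightarrow> H p y \<omega> > \<mu>" and R0: "R \<ge> 0"
   and vs: "visc_sub H \<omega> \<mu> v" and lip: "L-lipschitz_on UNIV v" and xy: "x0 < y0"
  shows "v y0 - v x0 \<le> R*(y0-x0)"
proof (rule ccontr)
  assume nt: "\<not> v y0 - v x0 \<le> R*(y0-x0)"
  define g where "g = v y0 - v x0 - R*(y0-x0)"
  have g: "g > 0" using nt unfolding g_def by simp
  define \<delta> where "\<delta> = g / (2*(y0-x0)^2)"
  have \<delta>: "\<delta> > 0" "\<delta> * (y0-x0)^2 = g/2" using g xy unfolding \<delta>_def by auto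
  have L0: "L \<ge> 0" using lip by (rule lipschitz_on_nonneg)
  have vL: "\<bar>v a - v c\<bar> \<le> L * \<bar>a - c\<bar>" for a c
    using lip unfolding lipschitz_on_def dist_real_def by auto
  define G where "G r = v r - R*r - \<delta>*(r-x0)^2" for r
  have Gy: "G y0 > G x0"
  proof -
    have 1: "G x0 = v x0 - R*x0" unfolding G_def by simp
    have 2: "G y0 = v y0 - R*y0 - g/2" unfolding G_def using \<delta>(2) by simp
    have "R*(y0-x0) = R*y0 - R*x0" by (simp add: algebra_simps)
    thus ?thesis using 1 2 g unfolding g_def by (simp add: field_simps)
  qed
  define B where "B = y0 + L/\<delta> + 1"
  have Ld: "L/\<delta> \<ge> 0" using L0 \<delta> by simp
  have contv: "continuous_on UNIV v" using lip by (rule lipschitz_on_continuous_on)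
  have cont: "continuous_on {x0..B} G"
    unfolding G_def by (intro continuous_intros continuous_on_subset[OF contv]) auto
  have ne: "{x0..B} \<noteq> {}" using xy Ld unfolding B_def by auto
  obtain r0 where r0: "r0 \<in> {x0..B}" "\<And>r. r \<in> {x0..B} \<Longrightarrow> G r \<le> G r0"
    using continuous_attains_sup[OF compact_Icc ne cont] by blast
  have yin: "y0 \<in> {x0..B}" using xy Ld unfolding B_def by auto
  have glob: "G r \<le> G r0" if "r \<ge> x0" for r
  proof (cases "r \<le> B")
    case True then show ?thesis using r0 that by auto
  next
    case False
    then have d: "r - x0 > L/\<delta>" unfolding B_def using xy by auto
    then have dl: "\<delta> * (r - x0) > L" using \<delta> by (simp add: field_simps)
    have pos: "r - x0 > 0" using d Ld by linarith
    have "\<delta> * (r - x0) * (r - x0) > L * (r - x0)"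
      using mult_strict_right_mono[OF dl pos] .
    then have "\<delta>*(r-x0)^2 > L * (r - x0)"
      by (simp add: power2_eq_square mult.assoc)
    moreover have "v r \<le> v x0 + L*(r-x0)" using vL[of r x0] that by simp
    moreover have "R * r \<ge> R * x0" using R0 that by (simp add: mult_left_mono)
    ultimately have "G r < G x0" unfolding G_def by simp
    also have "\<dots> < G y0" by (rule Gy)
    also have "\<dots> \<le> G r0" using r0(2)[OF yin] .
    finally show ?thesis by simp
  qed
  have rne: "r0 \<noteq> x0" using r0(2)[OF yin] Gy by auto
  define e where "e = r0 - x0"
  have e: "e > 0" using rne r0(1) unfolding e_def by auto
  have der: "((\<lambda>r. R*r + \<delta>*(r-x0)^2) has_real_derivative (R + 2*\<delta>*(z-x0))) (at z)" for z
    by (auto intro!: derivative_eq_intros)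
  have cd: "continuous_on UNIV (\<lambda>z. R + 2*\<delta>*(z-x0))" by (intro continuous_intros)
  have loc: "v z - (R*z + \<delta>*(z-x0)^2) \<le> v r0 - (R*r0 + \<delta>*(r0-x0)^2)" if "\<bar>z - r0\<bar> < e" for z
    using glob[of z] that unfolding G_def e_def by (auto simp: algebra_simps)
  have "H ((\<lambda>z. R + 2*\<delta>*(z-x0)) r0) r0 \<omega> \<le> \<mu>"
    by (rule visc_subD[OF vs der cd e loc])
  moreover have "\<bar>R + 2*\<delta>*(r0-x0)\<bar> \<ge> R" using R0 \<delta> r0(1) by auto
  ultimately show False using Rb by (meson not_le)
qed

lemma lip_down:
  fixes H :: "real \<Rightarrow> real \<Rightarrow> 'w \<Rightarrow> real"
  assumes Rb: "\<And>p y. \<bar>p\<bar> \<ge> R \<Longrightarrow> H p y \<omega> > \<mu>" and R0: "R \<ge> 0"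
   and vs: "visc_sub H \<omega> \<mu> v" and lip: "L-lipschitz_on UNIV v" and xy: "x0 < y0"
  shows "v x0 - v y0 \<le> R*(y0-x0)"
proof (rule ccontr)
  assume nt: "\<not> v x0 - v y0 \<le> R*(y0-x0)"
  define g where "g = v x0 - v y0 - R*(y0-x0)"
  have g: "g > 0" using nt unfolding g_def by simp
  define \<delta> where "\<delta> = g / (2*(y0-x0)^2)"
  have \<delta>: "\<delta> > 0" "\<delta> * (y0-x0)^2 = g/2" using g xy unfolding \<delta>_def by auto
  have L0: "L \<ge> 0" using lip by (rule lipschitz_on_nonneg)
  have vL: "\<bar>v a - v c\<bar> \<le> L * \<bar>a - c\<bar>" for a c
    using lip unfolding lipschitz_on_def dist_real_def by auto
  define G where "G r = v r + R*r - \<delta>*(r-y0)^2" for r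
  have Gx: "G x0 > G y0"
  proof -
    have 1: "G y0 = v y0 + R*y0" unfolding G_def by simp
    have 2: "G x0 = v x0 + R*x0 - g/2" unfolding G_def using \<delta>(2) by (simp add: power2_commute)
    have "R*(y0-x0) = R*y0 - R*x0" by (simp add: algebra_simps)
    thus ?thesis using 1 2 g unfolding g_def by (simp add: field_simps)
  qed
  define B where "B = x0 - L/\<delta> - 1"
  have Ld: "L/\<delta> \<ge> 0" using L0 \<delta> by simp
  have contv: "continuous_on UNIV v" using lip by (rule lipschitz_on_continuous_on)
  have cont: "continuous_on {B..y0} G"
    unfolding G_def by (intro continuous_intros continuous_on_subset[OF contv]) auto
  have ne: "{B..y0} \<noteq> {}" using xy Ld unfolding B_def by auto
  obtain r0 where r0: "r0 \<in> {B..y0}" "\<And>r. r \<in> {B..y0} \<Longrightarrow> G r \<le> G r0"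
    using continuous_attains_sup[OF compact_Icc ne cont] by blast
  have xin: "x0 \<in> {B..y0}" using xy Ld unfolding B_def by auto
  have glob: "G r \<le> G r0" if "r \<le> y0" for r
  proof (cases "B \<le> r")
    case True then show ?thesis using r0 that by auto
  next
    case False
    then have d: "y0 - r > L/\<delta>" unfolding B_def using xy by auto
    then have dl: "\<delta> * (y0 - r) > L" using \<delta> by (simp add: field_simps)
    have pos: "y0 - r > 0" using d Ld by linarith
    have "\<delta> * (y0 - r) * (y0 - r) > L * (y0 - r)"
      using mult_strict_right_mono[OF dl pos] .
    then have "\<delta>*(r-y0)^2 > L * (y0 - r)"
      by (simp add: power2_eq_square mult.assoc algebra_simps)
    moreover have "v r \<le> v y0 + L*(y0-r)" using vL[of r y0] that by simp
    moreover have "R * r \<le> R * y0" using R0 that by (simp add: mult_left_mono)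
    ultimately have "G r < G y0" unfolding G_def by simp
    also have "\<dots> < G x0" by (rule Gx)
    also have "\<dots> \<le> G r0" using r0(2)[OF xin] .
    finally show ?thesis by simp
  qed
  have rne: "r0 \<noteq> y0" using r0(2)[OF xin] Gx by auto
  define e where "e = y0 - r0"
  have e: "e > 0" using rne r0(1) unfolding e_def by auto
  have der: "((\<lambda>r. -R*r + \<delta>*(r-y0)^2) has_real_derivative (-R + 2*\<delta>*(z-y0))) (at z)" for z
    by (auto intro!: derivative_eq_intros)
  have cd: "continuous_on UNIV (\<lambda>z. -R + 2*\<delta>*(z-y0))" by (intro continuous_intros)
  have loc: "v z - (-R*z + \<delta>*(z-y0)^2) \<le> v r0 - (-R*r0 + \<delta>*(r0-y0)^2)" if "\<bar>z - r0\<bar> < e" for z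
    using glob[of z] that unfolding G_def e_def by (auto simp: algebra_simps)
  have "H ((\<lambda>z. -R + 2*\<delta>*(z-y0)) r0) r0 \<omega> \<le> \<mu>"
    by (rule visc_subD[OF vs der cd e loc])
  moreover have "\<bar>-R + 2*\<delta>*(r0-y0)\<bar> \<ge> R"
  proof -
    have "2*\<delta>*(r0-y0) \<le> 0" using \<delta> r0(1) by (simp add: mult_nonneg_nonpos)
    thus ?thesis using R0 by auto
  qed
  ultimately show False using Rb by (meson not_le)
qed

lemma glue:
  fixes H :: "real \<Rightarrow> real \<Rightarrow> 'w \<Rightarrow> real"
  assumes vs: "visc_sub H \<omega> \<mu> v" and lip: "L-lipschitz_on UNIV v" and l0: "l' \<ge> 0"
   and lin: "\<And>q u. \<bar>q\<bar> \<le> l' \<Longrightarrow> H q u \<omega> \<le> \<mu>"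
   and btw: "(x \<le> z \<and> z \<le> y) \<or> (y \<le> z \<and> z \<le> x)"
  shows "\<exists>w. glob_lipschitz w \<and> visc_sub H \<omega> \<mu> w \<and> w y - w x \<ge> v z - v x + l' * \<bar>y - z\<bar>"
proof (cases "z = y")
  case True
  then show ?thesis using vs lip unfolding glob_lipschitz_def by (intro exI[of _ v]) auto
next
  case zy: False
  have L0: "L \<ge> 0" using lip by (rule lipschitz_on_nonneg)
  have vL: "\<bar>v a - v c\<bar> \<le> L * \<bar>a - c\<bar>" for a c
    using lip unfolding lipschitz_on_def dist_real_def by auto
  define sg :: real where "sg = (if z \<le> y then 1 else -1)"
  have sg: "\<bar>sg\<bar> = 1" "sg * (y - z) = \<bar>y - z\<bar>" "sg * (x - z) \<le> 0"
    using btw zy unfolding sg_def by auto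
  define f where "f t0 = (if t0 \<ge> 0 then l' * t0 else L * t0)" for t0 :: real
  define h where "h r = v z + f (sg*(r-z))" for r
  define w where "w r = max (v r) (h r)" for r
  have fL: "\<bar>f a - f b\<bar> \<le> (L+l') * \<bar>a - b\<bar>" for a b
  proof -
    consider "a \<ge> 0" "b \<ge> 0" | "a < 0" "b < 0" | "a \<ge> 0" "b < 0" | "a < 0" "b \<ge> 0" by linarith
    then show ?thesis
    proof cases
      case 1
      then have "\<bar>f a - f b\<bar> = l' * \<bar>a - b\<bar>" unfolding f_def by (simp add: abs_mult l0 right_diff_distrib[symmetric])
      then show ?thesis using L0 by (simp add: mult_right_mono)
    next
      case 2
      then have "\<bar>f a - f b\<bar> = L * \<bar>a - b\<bar>" unfolding f_def by (simp add: abs_mult L0 right_diff_distrib[symmetric])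
      then show ?thesis using l0 by (simp add: mult_right_mono)
    next
      case 3
      then have "f a - f b = l'*a + L*(-b)" "\<bar>a - b\<bar> = a + (-b)" unfolding f_def by auto
      moreover have "l'*a \<le> (L+l')*a" "L*(-b) \<le> (L+l')*(-b)" using 3 L0 l0 by (auto intro: mult_right_mono)
      moreover have "l'*a \<ge> 0" "L*(-b) \<ge> 0" using 3 L0 l0 by (auto simp: mult_nonneg_nonpos)
      ultimately show ?thesis by (simp add: right_diff_distrib)
    next
      case 4
      then have "f b - f a = l'*b + L*(-a)" "\<bar>a - b\<bar> = b + (-a)" unfolding f_def by auto
      moreover have "l'*b \<le> (L+l')*b" "L*(-a) \<le> (L+l')*(-a)" using 4 L0 l0 by (auto intro: mult_right_mono)
      moreover have "l'*b \<ge> 0" "L*(-a) \<ge> 0" using 4 L0 l0 by (auto simp: mult_nonneg_nonpos)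
      ultimately show ?thesis by (simp add: right_diff_distrib)
    qed
  qed
  have hL: "\<bar>h a - h b\<bar> \<le> (L+l') * \<bar>a - b\<bar>" for a b
  proof -
    have "\<bar>h a - h b\<bar> \<le> (L+l') * \<bar>sg*(a-z) - sg*(b-z)\<bar>" unfolding h_def using fL by simp
    also have "\<bar>sg*(a-z) - sg*(b-z)\<bar> = \<bar>a - b\<bar>" using sg(1)
      by (simp add: right_diff_distrib[symmetric] abs_mult)
    finally show ?thesis .
  qed
  have wL: "(L+l')-lipschitz_on UNIV w"
  proof (rule lipschitz_onI)
    fix a b :: real
    have "\<bar>v a - v b\<bar> \<le> (L+l') * \<bar>a - b\<bar>"
      using vL[of a b] l0 by (smt (verit) abs_ge_zero mult_right_mono)
    then show "dist (w a) (w b) \<le> (L+l') * dist a b"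
      unfolding w_def dist_real_def using hL[of a b] by (smt (verit))
  qed (use L0 l0 in auto)
  have hle: "h r \<le> v r" if "sg*(r-z) \<le> 0" for r
  proof -
    have "\<bar>sg*(r-z)\<bar> = \<bar>r - z\<bar>" using sg(1) by (simp add: abs_mult)
    then have e1: "sg*(r-z) = - \<bar>r - z\<bar>" using that by linarith
    have "h r = v z - L * \<bar>r - z\<bar>"
    proof (cases "sg*(r-z) = 0")
      case True then show ?thesis using e1 unfolding h_def f_def by simp
    next
      case False then show ?thesis using e1 that unfolding h_def f_def by simp
    qed
    then show ?thesis using vL[of r z] by linarith
  qed
  have wvs: "visc_sub H \<omega> \<mu> w"
    unfolding w_def
  proof (rule max_visc[OF vs])
    fix u assume vu: "v u < h u"
    then have pos: "sg*(u-z) > 0" using hle[of u] by linarith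
    define e where "e = \<bar>u - z\<bar>"
    have e: "e > 0" using pos unfolding e_def by auto
    have "h r = h u + (l' * sg)*(r-u)" if "\<bar>r-u\<bar> < e" for r
    proof -
      have "sg*(r-z) > 0"
      proof (cases "sg = 1")
        case True then show ?thesis using pos that unfolding e_def by auto
      next
        case False then have "sg = -1" using sg(1) by auto
        then show ?thesis using pos that unfolding e_def by auto
      qed
      then show ?thesis using pos unfolding h_def f_def by (simp add: algebra_simps)
    qed
    moreover have "H (l' * sg) u \<omega> \<le> \<mu>" using lin sg(1) l0 by (simp add: abs_mult)
    ultimately show "\<exists>e>0. \<exists>q. H q u \<omega> \<le> \<mu> \<and> (\<forall>r. \<bar>r-u\<bar> < e \<longrightarrow> h r = h u + q*(r-u))"
      using e by blast
  qed
  have wx: "w x = v x" unfolding w_def using hle[OF sg(3)] by simp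
  have wy: "w y \<ge> v z + l' * \<bar>y - z\<bar>"
    unfolding w_def h_def f_def using sg(2) by auto
  show ?thesis
    using wL wvs wx wy unfolding glob_lipschitz_def by (intro exI[of _ w]) auto
qed

theorem lemma4p10:
  fixes H :: "real \<Rightarrow> real \<Rightarrow> 'w \<Rightarrow> real"
    and c c0 C0 \<gamma> :: real and w :: "real \<Rightarrow> real"
    and x \<mu> t s :: real and \<omega> :: 'w
  assumes H1: "c > 0" "\<And>p q y \<omega>. \<bar>H p y \<omega> - H q y \<omega>\<bar> \<le> c * \<bar>p - q\<bar>"
    and H2: "c0 > 0" "C0 > 0" "\<gamma> > 0"
      "\<And>p y \<omega>. - c0 * \<bar>p + \<gamma>\<bar> \<le> H p y \<omega>" "\<And>p y \<omega>. H p y \<omega> \<le> C0 * \<bar>p + \<gamma>\<bar>"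
    and H3: "\<And>M. \<exists>R. \<forall>p y \<omega>. \<bar>p\<bar> \<ge> R \<longrightarrow> H p y \<omega> \<ge> M"
    and H4: "mono w" "\<And>r. w r \<ge> 0" "(w \<longlongrightarrow> 0) (at_right 0)"
      "\<And>p x y \<omega>. \<bar>H p y \<omega> - H p x \<omega>\<bar> \<le> w (\<bar>x - y\<bar> * (1 + \<bar>p\<bar>))"
    and H5: "\<And>y \<omega>. convex_on UNIV (\<lambda>p. H p y \<omega>)"
    and H6: "\<And>p y \<omega>. H p y \<omega> \<ge> H 0 y \<omega>"
    and mu: "\<mu> > A_tilde H \<omega>"
    and ts: "0 \<le> t" "t \<le> s"
  shows "hausdorff_dist (reachable H \<mu> t x \<omega>) (reachable H \<mu> s x \<omega>)
           \<le> (s - t) / ((\<mu> - A_tilde H \<omega>) / c)"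
proof -
  define S where "S = {v. glob_lipschitz v \<and> visc_sub H \<omega> \<mu> v}"
  define A where "A = A_tilde H \<omega>"
  define l where "l = (\<mu> - A)/c"
  have l: "l > 0" using mu H1(1) unfolding l_def A_def by simp
  define m where "m y = m_mu H \<mu> y x \<omega>" for y
  have m_eq: "m y = Sup {v y - v x | v. v \<in> S}" for y
    unfolding m_def m_mu_def S_def by simp
  define Ms where "Ms = {\<mu>'. \<exists>v. glob_lipschitz v \<and> visc_sub H \<omega> \<mu>' v}"
  have A_eq: "A = Inf Ms" unfolding A_def A_tilde_def Ms_def by simp
  have zeroM: "(0::real) \<in> Ms"
  proof -
    have "visc_sub H \<omega> 0 (\<lambda>_. 0)"
      unfolding visc_sub_def
    proof (intro allI impI)
      fix y \<phi> \<phi>'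
      assume a: "(\<forall>z. (\<phi> has_real_derivative \<phi>' z) (at z)) \<and> continuous_on UNIV \<phi>' \<and>
        (\<exists>e>0. \<forall>z. \<bar>z - y\<bar> < e \<longrightarrow> 0 - \<phi> z \<le> 0 - \<phi> y)"
      then obtain e where e: "e > 0" "\<And>z. \<bar>z - y\<bar> < e \<Longrightarrow> 0 - \<phi> z \<le> 0 - \<phi> y" by blast
      have "0 = \<phi>' y"
        by (rule local_max_deriv[of "\<lambda>_. 0" 0 y \<phi> "\<phi>' y" e]) (use a e in auto)
      then have "H (\<phi>' y) y \<omega> = H 0 y \<omega>" by simp
      also have "\<dots> \<le> H (-\<gamma>) y \<omega>" by (rule H6)
      also have "\<dots> \<le> 0" using H2(5)[of "-\<gamma>" y \<omega>] by simp
      finally show "H (\<phi>' y) y \<omega> \<le> 0" .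
    qed
    moreover have "glob_lipschitz (\<lambda>_::real. 0::real)"
      unfolding glob_lipschitz_def by (intro exI[of _ 0] lipschitz_onI) auto
    ultimately show ?thesis unfolding Ms_def by blast
  qed
  have slack: "\<exists>v0. v0 \<in> S \<and> (\<forall>q u. \<bar>q\<bar> \<le> l' \<longrightarrow> H q u \<omega> \<le> \<mu>)" if "0 \<le> l'" "l' < l" for l'
  proof -
    have "c * l' < c * l" using that H1(1) by simp
    then have "Inf Ms < \<mu> - c*l'" using H1(1) unfolding A_eq[symmetric] l_def by simp
    then obtain \<mu>1 where mu1: "\<mu>1 \<in> Ms" "\<mu>1 < \<mu> - c*l'" using cInf_lessD zeroM by blast
    then obtain v1 L1 where v1: "L1-lipschitz_on UNIV v1" "visc_sub H \<omega> \<mu>1 v1"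
      unfolding Ms_def glob_lipschitz_def by blast
    have H0: "H 0 u \<omega> \<le> \<mu>1" for u
      by (rule H0_le[OF H6 H4(1) H4(3) H4(4) v1(2) v1(1)])
    have lin: "H q u \<omega> \<le> \<mu>" if "\<bar>q\<bar> \<le> l'" for q u
    proof -
      have "H q u \<omega> \<le> H 0 u \<omega> + c * \<bar>q\<bar>" using H1(2)[of q u \<omega> 0] by simp
      also have "c * \<bar>q\<bar> \<le> c * l'" using that H1(1) by simp
      finally show ?thesis using H0[of u] mu1(2) by linarith
    qed
    have "c * l' \<ge> 0" using that H1(1) by simp
    then have "\<mu>1 \<le> \<mu>" using mu1(2) by linarith
    then have "visc_sub H \<omega> \<mu> v1" by (rule visc_sub_mono[OF v1(2)])
    then have "v1 \<in> S" using v1(1) unfolding S_def glob_lipschitz_def by blast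
    then show ?thesis using lin by blast
  qed
  obtain R0 where R0: "\<And>p y \<omega>. \<bar>p\<bar> \<ge> R0 \<Longrightarrow> H p y \<omega> \<ge> \<mu> + 1" using H3[of "\<mu>+1"] by blast
  define R where "R = max R0 0"
  have R: "R \<ge> 0" "\<And>p y. \<bar>p\<bar> \<ge> R \<Longrightarrow> H p y \<omega> > \<mu>"
    unfolding R_def using R0 by (auto, smt (verit) R0)
  have bound: "v y - v x \<le> R * \<bar>y - x\<bar>" if vS: "v \<in> S" for v y
  proof -
    obtain L where L: "L-lipschitz_on UNIV v" "visc_sub H \<omega> \<mu> v"
      using vS unfolding S_def glob_lipschitz_def by blast
    consider "x < y" | "y < x" | "x = y" by linarith
    then show ?thesis
    proof cases
      case 1 then show ?thesis using lip_up[OF R(2) R(1) L(2) L(1) 1] by simp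
    next
      case 2 then show ?thesis using lip_down[OF R(2) R(1) L(2) L(1) 2] by simp
    qed simp
  qed
  obtain v0 where v0: "v0 \<in> S" using slack[of 0] l by auto
  have ne: "{v y - v x | v. v \<in> S} \<noteq> {}" for y using v0 by blast
  have bdd: "bdd_above {v y - v x | v. v \<in> S}" for y
    unfolding bdd_above_def using bound by blast
  have m_ge: "v y - v x \<le> m y" if "v \<in> S" for v y
    unfolding m_eq using that by (intro cSup_upper[OF _ bdd]) blast
  have m_x: "m x = 0"
  proof -
    have "{v x - v x | v. v \<in> S} = {0}" using v0 by auto
    then show ?thesis unfolding m_eq by simp
  qed
  have glue_m: "m z + l' * \<bar>y - z\<bar> \<le> m y"
    if gl: "0 \<le> l'" "l' < l" "(x \<le> z \<and> z \<le> y) \<or> (y \<le> z \<and> z \<le> x)" for l' y z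
  proof -
    obtain v1 where "v1 \<in> S" and lin: "\<And>q u. \<bar>q\<bar> \<le> l' \<Longrightarrow> H q u \<omega> \<le> \<mu>"
      using slack[OF gl(1,2)] by blast
    have "m z \<le> m y - l' * \<bar>y - z\<bar>"
      unfolding m_eq[of z]
    proof (rule cSup_least[OF ne])
      fix a assume "a \<in> {v z - v x | v. v \<in> S}"
      then obtain v where v: "v \<in> S" "a = v z - v x" by blast
      then obtain L where L: "L-lipschitz_on UNIV v" "visc_sub H \<omega> \<mu> v"
        unfolding S_def glob_lipschitz_def by blast
      obtain w' where w': "glob_lipschitz w'" "visc_sub H \<omega> \<mu> w'"
        "w' y - w' x \<ge> v z - v x + l' * \<bar>y - z\<bar>"
        using glue[OF L(2) L(1) gl(1) lin gl(3)] by blast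
      have "w' y - w' x \<le> m y" using w' by (intro m_ge) (auto simp: S_def)
      then show "a \<le> m y - l' * \<bar>y - z\<bar>" using w'(3) v(2) by linarith
    qed
    then show ?thesis by simp
  qed
  define Rt where "Rt = reachable H \<mu> t x \<omega>"
  define Rs where "Rs = reachable H \<mu> s x \<omega>"
  have Rt_eq: "Rt = {y. m y \<le> t}" unfolding Rt_def reachable_def m_def by simp
  have Rs_eq: "Rs = {y. m y \<le> s}" unfolding Rs_def reachable_def m_def by simp
  have xt: "x \<in> Rt" and xs: "x \<in> Rs" using m_x ts unfolding Rt_eq Rs_eq by auto
  have sub: "Rt \<subseteq> Rs" using ts unfolding Rt_eq Rs_eq by auto
  have bb: "bdd_below ((\<lambda>z. \<bar>y - z\<bar>) ` E)" for y and E :: "real set"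
    by (rule bdd_belowI[of _ 0]) auto
  have st: "s - t \<ge> 0" using ts by simp
  have part2: "(SUP y\<in>Rt. INF z\<in>Rs. \<bar>y - z\<bar>) \<le> (s - t) / l"
  proof (rule cSUP_least)
    show "Rt \<noteq> {}" using xt by blast
  next
    fix y assume "y \<in> Rt"
    then have "(INF z\<in>Rs. \<bar>y - z\<bar>) \<le> \<bar>y - y\<bar>" using sub by (intro cINF_lower[OF bb]) auto
    also have "\<dots> \<le> (s - t)/l" using st l by simp
    finally show "(INF z\<in>Rs. \<bar>y - z\<bar>) \<le> (s - t)/l" .
  qed
  have part1: "(SUP y\<in>Rs. INF z\<in>Rt. \<bar>y - z\<bar>) \<le> (s - t) / l"
  proof (rule cSUP_least)
    show "Rs \<noteq> {}" using xs by blast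
  next
    fix y assume yRs: "y \<in> Rs"
    define I where "I = (INF z\<in>Rt. \<bar>y - z\<bar>)"
    have Il: "I \<le> (s - t)/l'" if lp: "0 < l'" "l' < l" for l'
    proof -
      define d where "d = (s-t)/l'"
      have d: "d \<ge> 0" "l' * d = s - t" using st lp unfolding d_def by auto
      have "\<exists>z\<in>Rt. \<bar>y - z\<bar> \<le> d"
      proof (cases "\<bar>y - x\<bar> \<le> d")
        case True then show ?thesis using xt by blast
      next
        case False
        define z where "z = (if x \<le> y then y - d else y + d)"
        have btw: "(x \<le> z \<and> z \<le> y) \<or> (y \<le> z \<and> z \<le> x)" and yz: "\<bar>y - z\<bar> = d"
          using False d unfolding z_def by auto
        have "m z + l' * d \<le> m y" using glue_m[OF _ lp(2) btw] lp(1) yz by simp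
        then have "m z \<le> t" using yRs d unfolding Rs_eq by simp
        then show ?thesis using yz unfolding Rt_eq by auto
      qed
      then obtain z where "z \<in> Rt" "\<bar>y - z\<bar> \<le> d" by blast
      then show ?thesis unfolding I_def d_def by (intro cINF_lower2[OF bb]) auto
    qed
    have lim: "((\<lambda>l'. (s-t)/l') \<longlongrightarrow> (s-t)/l) (at_left l)"
      using l by (intro tendsto_intros) auto
    have ev: "\<forall>\<^sub>F l' in at_left l. I \<le> (s-t)/l'"
      unfolding eventually_at_left_field using l Il by (intro exI[of _ 0]) auto
    have "I \<le> (s-t)/l"
      by (rule tendsto_lowerbound[OF lim ev]) simp
    then show "(INF z\<in>Rt. \<bar>y - z\<bar>) \<le> (s - t)/l" unfolding I_def .
  qed
  have "hausdorff_dist Rt Rs \<le> (s - t) / l"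
    unfolding hausdorff_dist_def using part1 part2 by simp
  then show ?thesis unfolding Rt_def Rs_def l_def A_def .
qed

end
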